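(* Let $S$ be a regular semigroup with zero $0$, and let $e,f$ be idempotents of $S$. Then $ef=0$ if and only if $M(e,f)=\{0\}$.
   Context: A semigroup is regular if for every $x$ there is $y$ with $xyx=x$. For idempotents $e,f$ of $S$, $M(e,f)=\{g \text{ idempotent in } S: ge=g \text{ and } fg=g\}$. *)

theory Defs
  imports Main
begin

definition is_zero :: "'a::semigroup_mult \<Rightarrow> bool" where
  "is_zero z \<longleftrightarrow> (\<forall>x. z * x = z \<and> x * z = z)"

definition regular_semigroup :: "'a::semigroup_mult itself \<Rightarrow> bool" where
  "regular_semigroup _ \<longleftrightarrow> (\<forall>x::'a. \<exists>y. x * y * x = x)"

definition idem :: "'a::semigroup_mult \<Rightarrow> bool" where
  "idem e \<longleftrightarrow> e * e = e"

definition sandwich_set :: "'a::semigroup_mult \<Rightarrow> 'a \<Rightarrow> 'a set" ("M'(_,_')") where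
  "sandwich_set e f = {g. idem g \<and> g * e = g \<and> f * g = g}"

end

theory Submission
  imports Defs
begin

theorem lemma2p2:
  fixes z e f :: "'a::semigroup_mult"
  assumes "regular_semigroup TYPE('a)"
    and "is_zero z"
    and "idem e" and "idem f"
  shows "e * f = z \<longleftrightarrow> sandwich_set e f = {z}"
proof
  assume ef: "e * f = z"
  have zM: "z \<in> sandwich_set e f"
    using assms(2) unfolding sandwich_set_def idem_def is_zero_def by simp
  have "g = z" if g: "g \<in> sandwich_set e f" for g
  proof -
    have gi: "g * g = g" "g * e = g" "f * g = g" using g unfolding sandwich_set_def idem_def by auto
    have "g = (g * e) * (f * g)" using gi by simp
    also have "\<dots> = g * (e * f) * g" by (simp add: mult.assoc)
    also have "\<dots> = z" using ef assms(2) unfolding is_zero_def by simp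
    finally show ?thesis .
  qed
  then show "sandwich_set e f = {z}" using zM by blast
next
  assume M: "sandwich_set e f = {z}"
  obtain y where y: "e * f * y * (e * f) = e * f"
    using assms(1) unfolding regular_semigroup_def by blast
  define y' where "y' = y * (e * f) * y"
  have y1: "e * f * y' * (e * f) = e * f" unfolding y'_def using y
    by (metis mult.assoc)
  have y2: "y' * (e * f) * y' = y'" unfolding y'_def using y
    by (metis mult.assoc)
  define g where "g = f * y' * e"
  have "g * g = g" unfolding g_def using y2 by (metis mult.assoc)
  moreover have "g * e = g" unfolding g_def using assms(3) unfolding idem_def by (metis mult.assoc)
  moreover have "f * g = g" unfolding g_def using assms(4) unfolding idem_def by (metis mult.assoc)
  ultimately have "g \<in> sandwich_set e f" unfolding sandwich_set_def idem_def by simp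
  hence gz: "g = z" using M by blast
  have "e * f = e * f * y' * (e * f)" using y1 by simp
  also have "\<dots> = e * g * f" unfolding g_def using assms(3,4) unfolding idem_def by (metis mult.assoc)
  also have "\<dots> = z" using gz assms(2) unfolding is_zero_def by simp
  finally show "e * f = z" .
qed

end
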